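(* Let $k \geq 2$ be an integer. For each $k$-admissible integer $n$ such that $n \geq 2k$, any partial $k$-star design of order $n$ with at most $u(n,k)$ stars has a completion, where \[u(n,k)= \begin{cases} 2 \lfloor \frac{n-2}{k} \rfloor-1 & \text{if $n \not \equiv 1\pmod{k}$},\\ \frac{2(n-1)}{k} - 2 & \text{if $n \equiv 1\pmod{k}$.} \end{cases} \] Furthermore, for each $k$-admissible integer $n > 1$, there is a partial $k$-star design of order $n$ with $u(n,k)+1$ stars that has no completion.
   Context: A $k$-star is a copy of the complete bipartite graph $K_{1,k}$. For a set $V$, $K_V$ denotes the complete graph on $V$. A partial $k$-star design of order $n$ is a pair $(V,\mathcal{A})$ where $V$ is a set of $n$ vertices and $\mathcal{A}$ is a set of edge-disjoint $k$-stars that are subgraphs of $K_V$ (i.e. a $k$-star decomposition of some subgraph of $K_V$); if every edge of $K_V$ lies in some star of $\mathcal{A}$ it is a $k$-star design. A completion of $(V,\mathcal{A})$ is a $k$-star design $(V,\mathcal{B})$ with $\mathcal{A}\subseteq\mathcal{B}$. A positive integer $n$ is $k$-admissible if $\binom{n}{2}\equiv 0 \pmod{k}$. *)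

theory Defs
  imports Main
begin

definition complete_edges :: "'a set \<Rightarrow> 'a set set" where
  "complete_edges V = {{x, y} | x y. x \<in> V \<and> y \<in> V \<and> x \<noteq> y}"

definition is_kstar :: "nat \<Rightarrow> 'a set \<Rightarrow> 'a set set \<Rightarrow> bool" where
  "is_kstar k V S \<longleftrightarrow> (\<exists>c L. c \<in> V \<and> L \<subseteq> V \<and> c \<notin> L \<and> finite L \<and> card L = k
       \<and> S = (\<lambda>l. {c, l}) ` L)"

definition partial_kstar_design :: "nat \<Rightarrow> 'a set \<Rightarrow> 'a set set set \<Rightarrow> bool" where
  "partial_kstar_design k V A \<longleftrightarrow>
     (\<forall>S\<in>A. is_kstar k V S) \<and> (\<forall>S\<in>A. \<forall>T\<in>A. S \<noteq> T \<longrightarrow> S \<inter> T = {})"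

definition kstar_design :: "nat \<Rightarrow> 'a set \<Rightarrow> 'a set set set \<Rightarrow> bool" where
  "kstar_design k V B \<longleftrightarrow> partial_kstar_design k V B \<and> \<Union> B = complete_edges V"

definition has_completion :: "nat \<Rightarrow> 'a set \<Rightarrow> 'a set set set \<Rightarrow> bool" where
  "has_completion k V A \<longleftrightarrow> (\<exists>B. kstar_design k V B \<and> A \<subseteq> B)"

definition k_admissible :: "nat \<Rightarrow> nat \<Rightarrow> bool" where
  "k_admissible k n \<longleftrightarrow> (n choose 2) mod k = 0"

definition u_bound :: "nat \<Rightarrow> nat \<Rightarrow> int" where
  "u_bound n k = (if n mod k \<noteq> 1 mod k then 2 * ((int n - 2) div int k) - 1
                  else (2 * (int n - 1)) div int k - 2)"

end

theory Submission
  imports Defs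
begin

lemma finite_complete_edges: "finite V \<Longrightarrow> finite (complete_edges V)"
  unfolding complete_edges_def
  by (rule finite_subset[of _ "Pow V"]) auto

lemma hakimi_step:
  fixes d :: "'a \<Rightarrow> nat"
  assumes finV: "finite V" and FV: "F \<subseteq> complete_edges V" and eF: "e \<notin> F"
    and e: "e = {u, v}" "u \<in> V" "v \<in> V" "u \<noteq> v"
    and sumd: "sum d V = card (insert e F)"
    and good: "\<forall>S\<subseteq>V. u \<in> S \<and> v \<notin> S \<longrightarrow> card {f\<in>insert e F. f \<subseteq> S} < sum d S"
    and cond: "\<forall>S\<subseteq>V. card {f\<in>insert e F. f \<subseteq> S} \<le> sum d S"
    and IH: "\<And>d'. sum d' V = card F \<Longrightarrow> (\<forall>S\<subseteq>V. card {f\<in>F. f \<subseteq> S} \<le> sum d' S)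
              \<Longrightarrow> \<exists>t. (\<forall>f\<in>F. t f \<in> f) \<and> (\<forall>w\<in>V. card {f\<in>F. t f = w} = d' w)"
  shows "\<exists>t. (\<forall>f\<in>insert e F. t f \<in> f) \<and> (\<forall>w\<in>V. card {f\<in>insert e F. t f = w} = d w)"
proof -
  have finF: "finite F" using finite_subset[OF FV finite_complete_edges[OF finV]] .
  have split: "card {f\<in>insert e F. f \<subseteq> S} = card {f\<in>F. f \<subseteq> S} + (if e \<subseteq> S then 1 else 0)" for S
  proof -
    have fin: "finite {f\<in>F. f \<subseteq> S}" using finF by auto
    show ?thesis
    proof (cases "e \<subseteq> S")
      case True
      then have "{f\<in>insert e F. f \<subseteq> S} = insert e {f\<in>F. f \<subseteq> S}" by auto
      then show ?thesis using True eF fin by simp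
    next
      case False
      then have "{f\<in>insert e F. f \<subseteq> S} = {f\<in>F. f \<subseteq> S}" by auto
      then show ?thesis using False by simp
    qed
  qed
  have du: "d u \<ge> 1"
  proof -
    have "card {f\<in>insert e F. f \<subseteq> {u}} < sum d {u}" using good[rule_format, of "{u}"] e by simp
    then show ?thesis by simp
  qed
  define d' where "d' = (\<lambda>w. if w = u then d u - 1 else d w)"
  have sumd': "sum d' S = sum d S - (if u \<in> S then 1 else 0)" if "S \<subseteq> V" for S
  proof -
    have finS: "finite S" using that finV finite_subset by blast
    show ?thesis
    proof (cases "u \<in> S")
      case True
      have "sum d' S = d' u + sum d' (S - {u})" using True finS by (simp add: sum.remove)
      also have "sum d' (S - {u}) = sum d (S - {u})" unfolding d'_def by (rule sum.cong) auto
      also have "sum d S = d u + sum d (S - {u})" using True finS by (simp add: sum.remove)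
      ultimately show ?thesis using du True unfolding d'_def by simp
    next
      case False
      have "sum d' S = sum d S" unfolding d'_def by (rule sum.cong) (use False in auto)
      then show ?thesis using False by simp
    qed
  qed
  have "sum d' V = card F" using sumd' [of V] sumd e finF eF by simp
  moreover have "\<forall>S\<subseteq>V. card {f\<in>F. f \<subseteq> S} \<le> sum d' S"
  proof (intro allI impI)
    fix S assume SV: "S \<subseteq> V"
    show "card {f\<in>F. f \<subseteq> S} \<le> sum d' S"
    proof (cases "u \<in> S")
      case True
      show ?thesis
      proof (cases "v \<in> S")
        case True2: True
        then have "e \<subseteq> S" using e True by auto
        moreover have "card {f\<in>insert e F. f \<subseteq> S} \<le> sum d S" using cond SV by blast
        ultimately show ?thesis using split[of S] sumd'[OF SV] True by simp
      next
        case False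
        then have "\<not> e \<subseteq> S" using e by auto
        moreover have "card {f\<in>insert e F. f \<subseteq> S} < sum d S" using good SV True False by blast
        ultimately show ?thesis using split[of S] sumd'[OF SV] True by simp
      qed
    next
      case False
      then have "\<not> e \<subseteq> S" using e by auto
      moreover have "card {f\<in>insert e F. f \<subseteq> S} \<le> sum d S" using cond SV by blast
      ultimately show ?thesis using split[of S] sumd'[OF SV] False by simp
    qed
  qed
  ultimately obtain t where t: "\<forall>f\<in>F. t f \<in> f" "\<forall>w\<in>V. card {f\<in>F. t f = w} = d' w"
    using IH by blast
  define t' where "t' = t(e := u)"
  have "\<forall>f\<in>insert e F. t' f \<in> f" using t e eF unfolding t'_def by auto
  moreover have "\<forall>w\<in>V. card {f\<in>insert e F. t' f = w} = d w"
  proof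
    fix w assume wV: "w \<in> V"
    have fin: "finite {f\<in>F. t f = w}" using finF by auto
    have eq: "{f\<in>F. t' f = w} = {f\<in>F. t f = w}" unfolding t'_def using eF by auto
    show "card {f\<in>insert e F. t' f = w} = d w"
    proof (cases "w = u")
      case True
      then have "{f\<in>insert e F. t' f = w} = insert e {f\<in>F. t f = w}" using eq unfolding t'_def by auto
      then show ?thesis using True fin eF t(2) wV du unfolding d'_def by simp
    next
      case False
      then have "{f\<in>insert e F. t' f = w} = {f\<in>F. t f = w}" using eq eF unfolding t'_def by auto
      then show ?thesis using False t(2) wV unfolding d'_def by simp
    qed
  qed
  ultimately show ?thesis by blast
qed

lemma hakimi:
  fixes d :: "'a \<Rightarrow> nat"
  assumes finV: "finite V" and EV: "E \<subseteq> complete_edges V"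
    and sumd: "sum d V = card E"
    and cond: "\<forall>S\<subseteq>V. card {e\<in>E. e \<subseteq> S} \<le> sum d S"
  shows "\<exists>t. (\<forall>e\<in>E. t e \<in> e) \<and> (\<forall>v\<in>V. card {e\<in>E. t e = v} = d v)"
proof -
  have finE: "finite E" using finite_subset[OF EV finite_complete_edges[OF finV]] .
  from finE EV sumd cond show ?thesis
  proof (induction E arbitrary: d rule: finite_induct)
    case empty
    then have "\<forall>v\<in>V. d v = 0" using finV by simp
    then show ?case by simp
  next
    case (insert e F)
    have FV: "F \<subseteq> complete_edges V" using insert.prems by auto
    obtain u v where e: "e = {u, v}" "u \<in> V" "v \<in> V" "u \<noteq> v"
      using insert.prems(1) unfolding complete_edges_def by auto
    have IH: "\<And>d'. sum d' V = card F \<Longrightarrow> (\<forall>S\<subseteq>V. card {f\<in>F. f \<subseteq> S} \<le> sum d' S)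
              \<Longrightarrow> \<exists>t. (\<forall>f\<in>F. t f \<in> f) \<and> (\<forall>w\<in>V. card {f\<in>F. t f = w} = d' w)"
      using insert.IH FV by blast
    let ?c = "\<lambda>S. card {f\<in>insert e F. f \<subseteq> S}"
    show ?case
    proof (cases "\<forall>S\<subseteq>V. u \<in> S \<and> v \<notin> S \<longrightarrow> ?c S < sum d S")
      case True
      show ?thesis by (rule hakimi_step[OF finV FV insert.hyps(2) e insert.prems(2) True insert.prems(3) IH]) auto
    next
      case False1: False
      show ?thesis
      proof (cases "\<forall>S\<subseteq>V. v \<in> S \<and> u \<notin> S \<longrightarrow> ?c S < sum d S")
        case True
        have e': "e = {v, u}" using e by auto
        show ?thesis by (rule hakimi_step[OF finV FV insert.hyps(2) e' e(3) e(2) _ insert.prems(2) True insert.prems(3) IH]) (use e in auto)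
      next
        case False
        from False1 obtain S1 where S1: "S1 \<subseteq> V" "u \<in> S1" "v \<notin> S1" "sum d S1 \<le> ?c S1"
          by (auto simp: not_less)
        from False obtain S2 where S2: "S2 \<subseteq> V" "v \<in> S2" "u \<notin> S2" "sum d S2 \<le> ?c S2"
          by (auto simp: not_less)
        have finE: "finite (insert e F)" using insert.hyps by simp
        let ?X1 = "{f\<in>insert e F. f \<subseteq> S1}" and ?X2 = "{f\<in>insert e F. f \<subseteq> S2}"
        have fin12: "finite ?X1" "finite ?X2" using finE by auto
        have int: "?X1 \<inter> ?X2 = {f\<in>insert e F. f \<subseteq> S1 \<inter> S2}" by auto
        have sub: "insert e (?X1 \<union> ?X2) \<subseteq> {f\<in>insert e F. f \<subseteq> S1 \<union> S2}" using e S1 S2 by auto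
        have enot: "e \<notin> ?X1 \<union> ?X2" using e S1 S2 by auto
        have "card (insert e (?X1 \<union> ?X2)) \<le> ?c (S1 \<union> S2)"
          by (rule card_mono) (use finE sub in auto)
        then have "card (?X1 \<union> ?X2) + 1 \<le> ?c (S1 \<union> S2)" using enot fin12 by simp
        moreover have "card ?X1 + card ?X2 = card (?X1 \<union> ?X2) + card (?X1 \<inter> ?X2)"
          using card_Un_Int[OF fin12] .
        ultimately have sup: "?c S1 + ?c S2 + 1 \<le> ?c (S1 \<union> S2) + ?c (S1 \<inter> S2)" using int by simp
        have finS: "finite S1" "finite S2" using S1 S2 finV finite_subset by blast+
        have "sum d (S1 \<union> S2) + sum d (S1 \<inter> S2) = sum d S1 + sum d S2"
          using sum.union_inter[OF finS] .
        moreover have "?c (S1 \<union> S2) \<le> sum d (S1 \<union> S2)" "?c (S1 \<inter> S2) \<le> sum d (S1 \<inter> S2)"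
          using insert.prems(3)[rule_format, of "S1 \<union> S2"] insert.prems(3)[rule_format, of "S1 \<inter> S2"] S1 S2 by auto
        ultimately show ?thesis using sup S1 S2 by linarith
      qed
    qed
  qed
qed

lemma complete_edges_alt: "complete_edges S = {B. B \<subseteq> S \<and> card B = 2}"
  unfolding complete_edges_def by (auto simp: card_2_iff)

lemma card_complete_edges: "finite S \<Longrightarrow> card (complete_edges S) = card S choose 2"
  unfolding complete_edges_alt by (rule n_subsets)

lemma complete_edges_restrict: "S \<subseteq> W \<Longrightarrow> {e\<in>complete_edges W. e \<subseteq> S} = complete_edges S"
  unfolding complete_edges_def by auto

lemma distribute:
  fixes cap :: "'a \<Rightarrow> nat"
  assumes "finite W" "T \<le> sum cap W"
  shows "\<exists>j. (\<forall>w\<in>W. j w \<le> cap w) \<and> sum j W = T"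
  using assms
proof (induction W arbitrary: T rule: finite_induct)
  case empty
  then show ?case by simp
next
  case (insert w F)
  have "T - min T (cap w) \<le> sum cap F" using insert by auto
  then obtain j where j: "\<forall>x\<in>F. j x \<le> cap x" "sum j F = T - min T (cap w)" using insert.IH by blast
  define j' where "j' = j(w := min T (cap w))"
  have "sum j' F = sum j F" unfolding j'_def using insert.hyps by (intro sum.cong) auto
  then have "sum j' (insert w F) = T" using insert.hyps j unfolding j'_def by simp
  moreover have "\<forall>x\<in>insert w F. j' x \<le> cap x" using j unfolding j'_def by auto
  ultimately show ?case by blast
qed

lemma exists_le_avg:
  fixes f :: "'a \<Rightarrow> int"
  assumes "finite S" "S \<noteq> {}"
  shows "\<exists>v\<in>S. int (card S) * f v \<le> sum f S"
proof (rule ccontr)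
  assume "\<not> ?thesis"
  then have "\<forall>v\<in>S. sum f S < int (card S) * f v" by auto
  then have "(\<Sum>v\<in>S. sum f S) < (\<Sum>v\<in>S. int (card S) * f v)"
    using assms by (intro sum_strict_mono) auto
  then show False by (simp add: sum_distrib_left)
qed

lemma exists_ge_avg:
  fixes f :: "'a \<Rightarrow> int"
  assumes "finite S" "S \<noteq> {}"
  shows "\<exists>v\<in>S. sum f S \<le> int (card S) * f v"
proof (rule ccontr)
  assume "\<not> ?thesis"
  then have "\<forall>v\<in>S. int (card S) * f v < sum f S" by auto
  then have "(\<Sum>v\<in>S. int (card S) * f v) < (\<Sum>v\<in>S. sum f S)"
    using assms by (intro sum_strict_mono) auto
  then show False by (simp add: sum_distrib_left)
qed


lemma valid_exists:
  fixes \<rho> :: "'a \<Rightarrow> nat"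
  assumes finW: "finite W" and k: "k \<ge> 1" and N: "card W \<ge> 2*k - 1"
    and summ: "(sum \<rho> W) mod k = (card W choose 2) mod k"
  shows "\<exists>d. (\<forall>w\<in>W. d w mod k = \<rho> w mod k \<and> d w \<le> card W - 1) \<and> sum d W = card W choose 2"
proof -
  define N where "N = card W"
  define r where "r = (\<lambda>w. \<rho> w mod k)"
  define C where "C = N choose 2"
  have ev: "even (N * (N - 1))" by (cases "even N") (auto simp: odd_pos)
  have C2: "2 * C = N * (N - 1)" unfolding C_def using ev by (simp add: choose_two)
  have rle: "r w \<le> k - 1" for w unfolding r_def using k by (simp add: less_Suc_eq_le[symmetric]) 
  have sumr: "sum r W \<le> N * (k - 1)"
    using sum_mono[of W r "\<lambda>_. k - 1"] rle unfolding N_def by simp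
  have NC: "N * (k - 1) \<le> C"
  proof -
    have "2*(k-1) \<le> N - 1" using N k unfolding N_def by linarith
    then have "N * (2*(k-1)) \<le> N*(N-1)" by (rule mult_le_mono2)
    then have "2 * (N * (k - 1)) \<le> 2 * C" using C2 by (simp add: ac_simps)
    then show ?thesis by simp
  qed
  have modr: "sum r W mod k = C mod k" unfolding r_def C_def N_def
    using summ by (simp add: mod_sum_eq)
  have rC: "sum r W \<le> C" using sumr NC by linarith
  have "C mod k = sum r W mod k" using modr by simp
  then have dv: "k dvd (C - sum r W)" using mod_eq_dvd_iff_nat[OF rC] by blast
  define T where "T = (C - sum r W) div k"
  have kT: "k * T = C - sum r W" unfolding T_def using dv by simp
  define cap where "cap = (\<lambda>w. (N - 1 - r w) div k)"
  have capb: "N - 1 - r w \<le> k * cap w + (k - 1)" for w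
  proof -
    have "N - 1 - r w = k * cap w + (N - 1 - r w) mod k" unfolding cap_def by simp
    moreover have "(N - 1 - r w) mod k \<le> k - 1" using k by (simp add: less_Suc_eq_le[symmetric])
    ultimately show ?thesis by linarith
  qed
  have "sum (\<lambda>w. N - 1 - r w) W \<le> sum (\<lambda>w. k * cap w + (k - 1)) W"
    by (rule sum_mono) (rule capb)
  also have "\<dots> = k * sum cap W + N * (k - 1)" unfolding N_def by (simp add: sum.distrib sum_distrib_left)
  finally have A: "sum (\<lambda>w. N - 1 - r w) W \<le> k * sum cap W + N * (k - 1)" .
  have rl: "r w \<le> N - 1" for w using rle[of w] N unfolding N_def by linarith
  have "sum (\<lambda>w. N - 1 - r w) W + sum r W = sum (\<lambda>w. N - 1) W"
  proof -
    have "\<And>x. N - 1 - r x + r x = N - 1" using rl by (metis le_add_diff_inverse2)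
    then show ?thesis by (subst sum.distrib[symmetric]) simp
  qed
  then have B: "sum (\<lambda>w. N - 1 - r w) W + sum r W = N * (N - 1)" unfolding N_def by simp
  have "k * T \<le> k * sum cap W" using A B kT C2 NC sumr by linarith
  then have "T \<le> sum cap W" using k by simp
  then obtain j where j: "\<forall>w\<in>W. j w \<le> cap w" "sum j W = T" using distribute[OF finW] by blast
  define d where "d = (\<lambda>w. r w + k * j w)"
  have "\<forall>w\<in>W. d w mod k = \<rho> w mod k" unfolding d_def r_def by simp
  moreover have "\<forall>w\<in>W. d w \<le> N - 1"
  proof
    fix w assume "w \<in> W"
    then have "k * j w \<le> k * cap w" using j by simp
    also have "k * cap w \<le> N - 1 - r w" unfolding cap_def by simp
    finally show "d w \<le> N - 1" unfolding d_def using rl[of w] by linarith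
  qed
  moreover have "sum d W = C" unfolding d_def using j kT sumr NC
    by (simp add: sum.distrib sum_distrib_left[symmetric])
  ultimately show ?thesis unfolding N_def C_def by blast
qed

lemma sum_two:
  assumes "finite W" "v \<in> W" "w \<in> W" "v \<noteq> w"
  shows "sum f W = f v + f w + sum f (W - {v, w})"
proof -
  have "sum f W = f v + sum f (W - {v})" using assms by (simp add: sum.remove)
  moreover have "sum f (W - {v}) = f w + sum f (W - {v} - {w})" using assms by (simp add: sum.remove)
  moreover have "W - {v} - {w} = W - {v, w}" by auto
  ultimately show ?thesis by (simp add: add.assoc)
qed

lemma universality:
  fixes \<rho> :: "'a \<Rightarrow> nat"
  assumes finW: "finite W" and k: "k \<ge> 1" and N: "card W \<ge> 2*k - 1"
    and summ: "(sum \<rho> W) mod k = (card W choose 2) mod k"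
  shows "\<exists>t. (\<forall>e\<in>complete_edges W. t e \<in> e) \<and>
             (\<forall>w\<in>W. card {e\<in>complete_edges W. t e = w} mod k = \<rho> w mod k)"
proof -
  define N where "N = card W"
  define ll where "ll = N - 1"
  define valid where "valid = (\<lambda>d::'a\<Rightarrow>nat. (\<forall>w\<in>W. d w mod k = \<rho> w mod k \<and> d w \<le> ll) \<and> sum d W = N choose 2)"
  define \<Phi> where "\<Phi> = (\<lambda>d::'a\<Rightarrow>nat. nat (\<Sum>w\<in>W. (2 * int (d w) - int ll)^2))"
  obtain d0 where "valid d0" using valid_exists[OF finW k N summ] unfolding valid_def N_def ll_def by blast
  then obtain d where vd: "valid d" and mind: "\<And>d'. valid d' \<Longrightarrow> \<Phi> d \<le> \<Phi> d'"
    using ex_has_least_nat[of valid d0 \<Phi>] by blast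
  have cond: "\<forall>S\<subseteq>W. card {e\<in>complete_edges W. e \<subseteq> S} \<le> sum d S"
  proof (intro allI impI, rule ccontr)
    fix S assume SW: "S \<subseteq> W" and viol: "\<not> card {e\<in>complete_edges W. e \<subseteq> S} \<le> sum d S"
    have finS: "finite S" using SW finW finite_subset by blast
    define s where "s = card S"
    have viol': "sum d S < s choose 2" using viol complete_edges_restrict[OF SW] card_complete_edges[OF finS]
      unfolding s_def by simp
    define S' where "S' = W - S"
    define s' where "s' = card S'"
    have finS': "finite S'" unfolding S'_def using finW by simp
    have ss': "s + s' = N"
    proof -
      have "card (W - S) = card W - card S" using card_Diff_subset[OF finS SW] .
      moreover have "card S \<le> card W" using card_mono[OF finW SW] .
      ultimately show ?thesis by (simp add: s_def s'_def S'_def N_def)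
    qed
    have sumsplit: "sum d W = sum d S + sum d S'" unfolding S'_def using SW finW
      using sum.subset_diff[OF SW finW, of d] by simp
    have "S \<noteq> {}" using viol' unfolding s_def by auto
    have "S' \<noteq> {}"
    proof
      assume "S' = {}"
      then have "S = W" unfolding S'_def using SW by auto
      then show False using viol' vd unfolding valid_def s_def N_def by simp
    qed
    have s1: "s \<ge> 1" "s' \<ge> 1" using \<open>S \<noteq> {}\<close> \<open>S' \<noteq> {}\<close> finS finS' unfolding s_def s'_def
      by (auto simp: Suc_le_eq card_gt_0_iff)
    define x where "x = (\<lambda>w. 2 * int (d w) - int ll)"
    have ev2: "2 * int (m choose 2) = int m * (int m - 1)" for m
    proof -
      have ev: "even (m * (m - 1))" by (cases "even m") (auto simp: odd_pos)
      then have "2 * (m choose 2) = m * (m - 1)" by (simp add: choose_two)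
      then have "int (2 * (m choose 2)) = int (m * (m - 1))" by simp
      then show ?thesis by (cases m) (simp_all add: algebra_simps)
    qed
    have lll: "int ll = int s + int s' - 1" unfolding ll_def using s1 ss' by linarith
    have A1: "2 * int (sum d S) \<le> 2 * int (s choose 2) - 2" using viol' by linarith
    have A2: "sum x S = 2 * int (sum d S) - int s * int ll"
      unfolding x_def s_def by (simp add: sum_subtractf sum_distrib_left of_nat_sum)
    have A3: "int s * (int s - 1) - 2 - int s * int ll = - int s * int s' - 2"
      unfolding lll by algebra
    have XS: "sum x S \<le> - int s * int s' - 2" using A1 A2 A3 ev2[of s] by linarith
    have sumdW: "sum d W = N choose 2" using vd unfolding valid_def by simp
    have B1: "2 * int (sum d S') \<ge> 2 * int (N choose 2) - 2 * int (s choose 2) + 2"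
      using viol' sumsplit sumdW by linarith
    have B2: "sum x S' = 2 * int (sum d S') - int s' * int ll"
      unfolding x_def s'_def by (simp add: sum_subtractf sum_distrib_left of_nat_sum)
    have NN: "int N = int s + int s'" using ss' by simp
    have B3: "int N * (int N - 1) - int s * (int s - 1) + 2 - int s' * int ll = int s * int s' + 2"
      unfolding lll NN by algebra
    have XS': "sum x S' \<ge> int s * int s' + 2" using B1 B2 B3 ev2[of s] ev2[of N] by linarith
    obtain v where v: "v \<in> S" "int s * x v \<le> sum x S"
      using exists_le_avg[OF finS \<open>S \<noteq> {}\<close>] unfolding s_def by blast
    obtain w where w: "w \<in> S'" "sum x S' \<le> int s' * x w"
      using exists_ge_avg[OF finS' \<open>S' \<noteq> {}\<close>] unfolding s'_def by blast
    have xv: "x v \<le> - int s' - 1"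
    proof (rule ccontr)
      assume "\<not> ?thesis"
      then have "x v \<ge> - int s'" by simp
      then have "int s * x v \<ge> int s * (- int s')" using s1 by (intro mult_left_mono) auto
      then show False using v XS by simp
    qed
    have xw: "x w \<ge> int s + 1"
    proof (rule ccontr)
      assume "\<not> ?thesis"
      then have "x w \<le> int s" by simp
      then have "int s' * x w \<le> int s' * int s" using s1 by (intro mult_left_mono) auto
      then show False using w XS' by (simp add: mult.commute)
    qed
    have vW: "v \<in> W" and wW: "w \<in> W" and vw: "v \<noteq> w" using v w SW unfolding S'_def by auto
    have Nk: "2 * int k \<le> int N + 1" using N k unfolding N_def by linarith
    have dv_up: "d v + k \<le> ll" using xv s1 lll ss' Nk unfolding x_def by linarith
    have dw_dn: "d w \<ge> k" using xw s1 lll ss' Nk unfolding x_def by linarith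
    define d' where "d' = d(v := d v + k, w := d w - k)"
    have vd': "valid d'"
    proof -
      have "\<forall>u\<in>W. d' u mod k = \<rho> u mod k \<and> d' u \<le> ll"
      proof
        fix u assume uW: "u \<in> W"
        show "d' u mod k = \<rho> u mod k \<and> d' u \<le> ll"
        proof (cases "u = w")
          case True
          have "(d w - k) mod k = d w mod k" using dw_dn by (simp add: mod_if le_mod_geq)
          then show ?thesis using True vd uW unfolding valid_def d'_def by auto
        next
          case False
          then show ?thesis using vd uW dv_up unfolding valid_def d'_def by auto
        qed
      qed
      moreover have "sum d' W = sum d W"
      proof -
        have "sum d' W = d' v + d' w + sum d' (W - {v, w})"
          using sum_two[OF finW vW wW vw] by simp
        also have "sum d' (W - {v, w}) = sum d (W - {v, w})" unfolding d'_def by (rule sum.cong) auto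
        also have "sum d W = d v + d w + sum d (W - {v, w})"
          using sum_two[OF finW vW wW vw] by simp
        ultimately show ?thesis unfolding d'_def using vw dw_dn by simp
      qed
      ultimately show ?thesis using vd unfolding valid_def by simp
    qed
    define x' where "x' = (\<lambda>u. 2 * int (d' u) - int ll)"
    have sq: "(\<Sum>u\<in>W. (x' u)^2) < (\<Sum>u\<in>W. (x u)^2)"
    proof -
      have "(\<Sum>u\<in>W. (x' u)^2) = (x' v)^2 + (x' w)^2 + (\<Sum>u\<in>W-{v,w}. (x' u)^2)"
        using sum_two[OF finW vW wW vw] by simp
      moreover have "(\<Sum>u\<in>W. (x u)^2) = (x v)^2 + (x w)^2 + (\<Sum>u\<in>W-{v,w}. (x u)^2)"
        using sum_two[OF finW vW wW vw] by simp
      moreover have "(\<Sum>u\<in>W-{v,w}. (x' u)^2) = (\<Sum>u\<in>W-{v,w}. (x u)^2)"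
        unfolding x'_def x_def d'_def by (rule sum.cong) auto
      moreover have "(x' v)^2 = (x v + 2 * int k)^2" unfolding x'_def x_def d'_def using vw by (simp add: algebra_simps)
      moreover have "(x' w)^2 = (x w - 2 * int k)^2" unfolding x'_def x_def d'_def using dw_dn by (simp add: of_nat_diff algebra_simps)
      moreover have "(x v + 2 * int k)^2 + (x w - 2 * int k)^2 < (x v)^2 + (x w)^2"
      proof -
        have "x w - x v \<ge> 2 * int k + 1" using xv xw ss' Nk by linarith
        then have "4 * int k * (x v - x w + 2 * int k) < 0" using k
          by (simp add: mult_pos_neg)
        moreover have "(x v + 2 * int k)^2 + (x w - 2 * int k)^2 - ((x v)^2 + (x w)^2) = 4 * int k * (x v - x w + 2 * int k)"
          by (simp add: power2_eq_square algebra_simps)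
        ultimately show ?thesis by linarith
      qed
      ultimately show ?thesis by linarith
    qed
    have "0 \<le> (\<Sum>u\<in>W. (x' u)^2)" by (intro sum_nonneg) auto
    then have "\<Phi> d' < \<Phi> d" unfolding \<Phi>_def using sq unfolding x_def x'_def
      by simp
    then show False using mind[OF vd'] by simp
  qed
  have sumE: "sum d W = card (complete_edges W)" using vd card_complete_edges[OF finW]
    unfolding valid_def N_def by simp
  obtain t where t: "\<forall>e\<in>complete_edges W. t e \<in> e" "\<forall>v\<in>W. card {e\<in>complete_edges W. t e = v} = d v"
    using hakimi[OF finW order_refl sumE cond] by blast
  show ?thesis using t vd unfolding valid_def by auto
qed

lemma partition_k:
  assumes "finite Y" "k \<ge> 1" "k dvd card Y"
  shows "\<exists>P. (\<forall>p\<in>P. p \<subseteq> Y \<and> card p = k) \<and> (\<forall>p\<in>P. \<forall>q\<in>P. p \<noteq> q \<longrightarrow> p \<inter> q = {}) \<and> \<Union>P = Y"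
  using assms
proof (induction "card Y" arbitrary: Y rule: less_induct)
  case less
  show ?case
  proof (cases "Y = {}")
    case True
    then show ?thesis by (intro exI[of _ "{}"]) auto
  next
    case False
    then have "card Y > 0" using less.prems by auto
    then have "card Y \<ge> k" using less.prems dvd_imp_le by blast
    then obtain p where p: "p \<subseteq> Y" "card p = k" using obtain_subset_with_card_n by metis
    have finp: "finite p" using p less.prems finite_subset by blast
    have cY: "card (Y - p) = card Y - k" using p finp card_Diff_subset by metis
    have dvd': "k dvd card (Y - p)" using cY less.prems(3) \<open>card Y \<ge> k\<close> by (simp add: dvd_diff_nat)
    have lt: "card (Y - p) < card Y" using cY \<open>card Y > 0\<close> less.prems(2) by simp
    have finD: "finite (Y - p)" using less.prems(1) by simp
    obtain P where P: "\<forall>q\<in>P. q \<subseteq> Y - p \<and> card q = k"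
      "\<forall>q\<in>P. \<forall>r\<in>P. q \<noteq> r \<longrightarrow> q \<inter> r = {}" "\<Union>P = Y - p"
      using less.hyps[OF lt finD less.prems(2) dvd'] by iprover
    have pne: "p \<noteq> {}" using p less.prems(2) by auto
    have pnP: "\<forall>q\<in>P. p \<inter> q = {}" using P(3) by blast
    show ?thesis
    proof (intro exI[of _ "insert p P"] conjI)
      show "\<forall>q\<in>insert p P. q \<subseteq> Y \<and> card q = k" using P(1) p by auto
      show "\<forall>q\<in>insert p P. \<forall>r\<in>insert p P. q \<noteq> r \<longrightarrow> q \<inter> r = {}"
        using P(2) pnP by blast
      show "\<Union>(insert p P) = Y" using P(3) p by auto
    qed
  qed
qed

lemma kstar_edges: "is_kstar k V S \<Longrightarrow> S \<subseteq> complete_edges V"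
  unfolding is_kstar_def complete_edges_def by auto

lemma completion_from_orient:
  fixes T :: "'a \<Rightarrow> 'a \<Rightarrow> bool"
  assumes k: "k \<ge> 1" and finV: "finite V" and A: "partial_kstar_design k V A"
    and T1: "\<And>a b. T a b \<Longrightarrow> a \<in> V \<and> b \<in> V \<and> a \<noteq> b \<and> {a, b} \<notin> \<Union>A"
    and T2: "\<And>a b. a \<in> V \<Longrightarrow> b \<in> V \<Longrightarrow> a \<noteq> b \<Longrightarrow> {a, b} \<notin> \<Union>A \<Longrightarrow> T a b \<or> T b a"
    and T3: "\<And>a b. T a b \<Longrightarrow> \<not> T b a"
    and dv: "\<forall>a\<in>V. k dvd card {b. T a b}"
  shows "has_completion k V A"
proof -
  have finO: "finite {b. T a b}" for a using T1 finV by (auto intro: finite_subset[of _ V])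
  have "\<forall>a\<in>V. \<exists>P. (\<forall>p\<in>P. p \<subseteq> {b. T a b} \<and> card p = k) \<and> (\<forall>p\<in>P. \<forall>q\<in>P. p \<noteq> q \<longrightarrow> p \<inter> q = {}) \<and> \<Union>P = {b. T a b}"
    using partition_k[OF finO k] dv by blast
  then obtain Pf where Pf: "\<And>a. a \<in> V \<Longrightarrow> (\<forall>p\<in>Pf a. p \<subseteq> {b. T a b} \<and> card p = k) \<and> (\<forall>p\<in>Pf a. \<forall>q\<in>Pf a. p \<noteq> q \<longrightarrow> p \<inter> q = {}) \<and> \<Union>(Pf a) = {b. T a b}"
    by metis
  define st :: "'a \<Rightarrow> 'a set \<Rightarrow> 'a set set" where "st = (\<lambda>a p. (\<lambda>l. {a, l}) ` p)"
  define NB where "NB = {st a p | a p. a \<in> V \<and> p \<in> Pf a}"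
  define B where "B = A \<union> NB"
  have Astar: "\<forall>S\<in>A. is_kstar k V S" and Adisj: "\<forall>S\<in>A. \<forall>S'\<in>A. S \<noteq> S' \<longrightarrow> S \<inter> S' = {}"
    using A unfolding partial_kstar_design_def by auto
  have NBstar: "is_kstar k V S" if SNB: "S \<in> NB" for S
  proof -
    obtain a p where ap: "S = st a p" "a \<in> V" "p \<in> Pf a" using SNB unfolding NB_def by auto
    have "p \<subseteq> {b. T a b}" "card p = k" using Pf[OF ap(2)] ap(3) by auto
    moreover have "finite p" using \<open>p \<subseteq> {b. T a b}\<close> finO finite_subset by blast
    ultimately show ?thesis unfolding is_kstar_def st_def ap(1) using ap(2) T1
      by (intro exI[of _ a] exI[of _ p]) auto
  qed
  have NBedge: "e \<notin> \<Union>A" if SNB: "S \<in> NB" "e \<in> S" for S e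
  proof -
    obtain a p where ap: "S = st a p" "a \<in> V" "p \<in> Pf a" using SNB unfolding NB_def by auto
    obtain l where "l \<in> p" "e = {a, l}" using SNB(2) ap(1) unfolding st_def by auto
    then have "T a l" using Pf[OF ap(2)] ap(3) by auto
    then show ?thesis using T1 \<open>e = {a, l}\<close> by blast
  qed
  have NBdisj: "S \<inter> S' = {}" if SNB: "S \<in> NB" "S' \<in> NB" "S \<noteq> S'" for S S'
  proof (rule ccontr)
    assume "S \<inter> S' \<noteq> {}"
    then obtain e where e: "e \<in> S" "e \<in> S'" by auto
    obtain a p where ap: "S = st a p" "a \<in> V" "p \<in> Pf a" using SNB unfolding NB_def by auto
    obtain a' p' where ap': "S' = st a' p'" "a' \<in> V" "p' \<in> Pf a'" using SNB unfolding NB_def by auto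
    obtain l where l: "l \<in> p" "e = {a, l}" using e(1) ap(1) unfolding st_def by auto
    obtain l' where l': "l' \<in> p'" "e = {a', l'}" using e(2) ap'(1) unfolding st_def by auto
    have Tl: "T a l" using Pf[OF ap(2)] ap(3) l(1) by auto
    have Tl': "T a' l'" using Pf[OF ap'(2)] ap'(3) l'(1) by auto
    show False
    proof (cases "a = a'")
      case True
      then have "l = l'" using l l' Tl T1 by (metis doubleton_eq_iff)
      then have "p \<inter> p' \<noteq> {}" using l l' by auto
      then have "p = p'" using Pf[OF ap(2)] ap(3) ap'(3) True by blast
      then show False using SNB(3) ap ap' True by simp
    next
      case False
      then have "a = l'" "l = a'" using l l' by (auto simp: doubleton_eq_iff)
      then show False using Tl Tl' T3 by blast
    qed
  qed
  have partB: "partial_kstar_design k V B"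
    unfolding partial_kstar_design_def B_def
  proof (intro conjI ballI impI)
    fix S assume "S \<in> A \<union> NB"
    then show "is_kstar k V S" using Astar NBstar by auto
  next
    fix S S' assume S: "S \<in> A \<union> NB" and S': "S' \<in> A \<union> NB" and ne: "S \<noteq> S'"
    show "S \<inter> S' = {}"
    proof (cases "S \<in> A")
      case True
      show ?thesis
      proof (cases "S' \<in> A")
        case True
        then show ?thesis using \<open>S \<in> A\<close> ne Adisj by blast
      next
        case False
        then have "S' \<in> NB" using S' by auto
        then show ?thesis using NBedge True by blast
      qed
    next
      case False
      then have SN: "S \<in> NB" using S by auto
      show ?thesis
      proof (cases "S' \<in> A")
        case True
        then show ?thesis using NBedge SN by blast
      next
        case False
        then have "S' \<in> NB" using S' by auto
        then show ?thesis using NBdisj SN ne by blast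
      qed
    qed
  qed
  have "\<Union>B = complete_edges V"
  proof
    have "\<forall>S\<in>B. is_kstar k V S" using partB unfolding partial_kstar_design_def by blast
    then have "\<forall>S\<in>B. S \<subseteq> complete_edges V" using kstar_edges by blast
    then show "\<Union>B \<subseteq> complete_edges V" by (simp add: Sup_le_iff)
  next
    show "complete_edges V \<subseteq> \<Union>B"
    proof
      fix e assume "e \<in> complete_edges V"
      then obtain a b where ab: "e = {a, b}" "a \<in> V" "b \<in> V" "a \<noteq> b" unfolding complete_edges_def by auto
      show "e \<in> \<Union>B"
      proof (cases "e \<in> \<Union>A")
        case True
        then show ?thesis unfolding B_def by auto
      next
        case False
        have key: "e \<in> \<Union>NB" if "T x y" "e = {x, y}" for x y
        proof -
          have xV: "x \<in> V" using T1 that by blast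
          have "y \<in> \<Union>(Pf x)" using Pf[OF xV] that by auto
          then obtain p where "p \<in> Pf x" "y \<in> p" by auto
          then have "e \<in> st x p" "st x p \<in> NB" unfolding st_def NB_def using that xV by auto
          then show ?thesis by auto
        qed
        from T2[OF ab(2,3,4)] False ab(1) have "T a b \<or> T b a" by simp
        then have "e \<in> \<Union>NB"
        proof
          assume "T a b" then show ?thesis using key ab(1) by blast
        next
          assume "T b a" then show ?thesis using key[of b a] ab(1) by (simp add: insert_commute)
        qed
        then show ?thesis unfolding B_def by blast
      qed
    qed
  qed
  then have "kstar_design k V B" using partB unfolding kstar_design_def by simp
  then show ?thesis unfolding has_completion_def B_def by blast
qed

lemma sum_out:
  fixes T :: "'a \<Rightarrow> 'a \<Rightarrow> bool"
  assumes finV: "finite V"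
    and T1: "\<And>a b. T a b \<Longrightarrow> a \<in> V \<and> b \<in> V \<and> a \<noteq> b"
    and T3: "\<And>a b. T a b \<Longrightarrow> \<not> T b a"
  shows "(\<Sum>a\<in>V. card {b. T a b}) = card {{a, b} | a b. T a b}"
proof -
  have finO: "finite {b. T a b}" for a using T1 finV by (auto intro: finite_subset[of _ V])
  have "card (Sigma V (\<lambda>a. {b. T a b})) = (\<Sum>a\<in>V. card {b. T a b})"
    by (rule card_SigmaI[OF finV]) (simp add: finO)
  moreover have "bij_betw (\<lambda>(a, b). {a, b}) (Sigma V (\<lambda>a. {b. T a b})) {{a, b} | a b. T a b}"
  proof (rule bij_betwI')
    fix x y assume "x \<in> Sigma V (\<lambda>a. {b. T a b})" "y \<in> Sigma V (\<lambda>a. {b. T a b})"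
    then show "((case x of (a, b) \<Rightarrow> {a, b}) = (case y of (a, b) \<Rightarrow> {a, b})) = (x = y)"
      using T3 by (cases x; cases y) (auto simp: doubleton_eq_iff)
  next
    fix x assume "x \<in> Sigma V (\<lambda>a. {b. T a b})"
    then show "(case x of (a, b) \<Rightarrow> {a, b}) \<in> {{a, b} |a b. T a b}" by auto
  next
    fix y assume "y \<in> {{a, b} |a b. T a b}"
    then obtain a b where "y = {a, b}" "T a b" by auto
    then show "\<exists>x\<in>Sigma V (\<lambda>a. {b. T a b}). y = (case x of (a, b) \<Rightarrow> {a, b})"
      using T1 by (intro bexI[of _ "(a, b)"]) auto
  qed
  ultimately show ?thesis using bij_betw_same_card by fastforce
qed

lemma u_cases:
  assumes k: "k \<ge> 2" and n: "n \<ge> 2"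
  shows "(n mod k \<noteq> 1 \<and> u_bound n k = 2 * int ((n - 2) div k) - 1) \<or>
         (n mod k = 1 \<and> u_bound n k = 2 * int ((n - 1) div k) - 2 \<and> n - 1 = k * ((n - 1) div k))"
proof (cases "n mod k = 1")
  case False
  have e1: "int (n - 2) = int n - 2" using n by (simp add: of_nat_diff)
  have "int ((n - 2) div k) = int (n - 2) div int k" by (rule zdiv_int)
  also have "\<dots> = (int n - 2) div int k" using e1 by simp
  finally have "(int n - 2) div int k = int ((n - 2) div k)" by simp
  moreover have "n mod k \<noteq> 1 mod k" using False k by simp
  ultimately show ?thesis using False unfolding u_bound_def by simp
next
  case True
  have km: "1 mod k = 1" using k by simp
  have "n div k * k + n mod k = n" by (rule div_mult_mod_eq)
  then have "n - 1 = n div k * k" using True by linarith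
  then have e: "n - 1 = k * (n div k)" by (simp add: mult.commute)
  have kp: "k > 0" using k by simp
  define q where "q = (n - 1) div k"
  have "(n - 1) div k = n div k" using e kp by simp
  then have d: "n - 1 = k * q" using e unfolding q_def by simp
  have "n = k * q + 1" using d n by linarith
  then have nI: "int n = int k * int q + 1" by simp
  have "(2 * (int n - 1)) div int k = (int k * (2 * int q)) div int k" using nI by (simp add: algebra_simps)
  also have "\<dots> = 2 * int q" using kp by simp
  finally have "(2 * (int n - 1)) div int k = 2 * int q" .
  then have "u_bound n k = 2 * int q - 2" using True km unfolding u_bound_def by simp
  then show ?thesis using True d unfolding q_def by simp
qed

lemma arith_N:
  fixes k n m :: nat
  assumes k: "k \<ge> 2" and n: "n \<ge> 2 * k" and m: "int m \<le> u_bound n k"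
  shows "m + 2 * k - 1 \<le> n"
proof -
  have n2: "n \<ge> 2" using k n by simp
  from u_cases[OF k n2] show ?thesis
  proof
    assume A: "n mod k \<noteq> 1 \<and> u_bound n k = 2 * int ((n - 2) div k) - 1"
    define q where "q = (n - 2) div k"
    define r where "r = (n - 2) mod k"
    have nq: "n - 2 = q * k + r" unfolding q_def r_def by simp
    have mq: "int m \<le> 2 * int q - 1" using A m unfolding q_def by simp
    have nI: "int n = int q * int k + int r + 2" proof -
      have "n = q * k + r + 2" using nq n2 by linarith
      then show ?thesis by simp
    qed
    have "q \<ge> 1"
    proof (rule ccontr)
      assume "\<not> q \<ge> 1"
      then have "q = 0" by simp
      then have "n - 2 < k" unfolding q_def using k by (simp add: div_eq_0_iff)
      then show False using n k by simp
    qed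
    show ?thesis
    proof (cases "q = 1")
      case True
      then show ?thesis using mq n k by simp
    next
      case False
      then have q2: "int q \<ge> 2" using \<open>q \<ge> 1\<close> by simp
      have "0 \<le> (int q - 2) * (int k - 2)" using q2 k by simp
      moreover have "(int q - 2) * (int k - 2) = int q * int k - 2 * int q - 2 * int k + 4"
        by (simp add: algebra_simps)
      ultimately show ?thesis using nI mq k by linarith
    qed
  next
    assume A: "n mod k = 1 \<and> u_bound n k = 2 * int ((n - 1) div k) - 2 \<and> n - 1 = k * ((n - 1) div k)"
    define q where "q = (n - 1) div k"
    have mq: "int m \<le> 2 * int q - 2" using A m unfolding q_def by simp
    have nI: "int n = int q * int k + 1"
    proof -
      have "n - 1 = k * q" using A unfolding q_def by simp
      then have "n = k * q + 1" using n2 by linarith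
      then show ?thesis by (simp add: mult.commute)
    qed
    have q2: "int q \<ge> 2"
    proof (rule ccontr)
      assume "\<not> int q \<ge> 2"
      then have "int q \<le> 1" by simp
      then have "int q * int k \<le> 1 * int k" using k by (intro mult_right_mono) auto
      then show False using nI n k by linarith
    qed
    have "0 \<le> (int q - 2) * (int k - 2)" using q2 k by simp
    moreover have "(int q - 2) * (int k - 2) = int q * int k - 2 * int q - 2 * int k + 4"
      by (simp add: algebra_simps)
    ultimately show ?thesis using nI mq k by linarith
  qed
qed

lemma arith_claim:
  fixes k n m p cx cy fx fy :: nat
  assumes k: "k \<ge> 2" and n: "n \<ge> 2 * k" and m: "int m \<le> u_bound n k"
    and c1: "cx \<ge> 1" "cy \<ge> 1" and cm: "cx + cy + (p - 2) \<le> m" and p2: "p \<ge> 2" and pn: "p \<le> n"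
    and fx: "fx + k * cx \<ge> n - p" and fy: "fy + k * cy \<ge> n - p"
    and fxk: "fx + 2 \<le> k" and fyk: "fy + 2 \<le> k"
  shows False
proof -
  define c where "c = min cx cy"
  have kc: "int k * int c \<ge> int n - int p - int k + 2"
  proof (cases "cx \<le> cy")
    case True
    then have cc: "c = cx" unfolding c_def by simp
    have "n - p \<le> fx + k * c" using fx cc by simp
    then have "int (n - p) \<le> int (fx + k * c)" by (simp only: of_nat_le_iff)
    then have "int n - int p \<le> int fx + int k * int c" using pn by (simp add: of_nat_diff)
    then show ?thesis using fxk by linarith
  next
    case False
    then have cc: "c = cy" unfolding c_def by simp
    have "n - p \<le> fy + k * c" using fy cc by simp
    then have "int (n - p) \<le> int (fy + k * c)" by (simp only: of_nat_le_iff)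
    then have "int n - int p \<le> int fy + int k * int c" using pn by (simp add: of_nat_diff)
    then show ?thesis using fyk by linarith
  qed
  have pm: "int p \<le> int m - int cx - int cy + 2" using cm p2 by linarith
  have cc: "2 * int c \<le> int cx + int cy" unfolding c_def by simp
  have cmm: "int cx + int cy \<le> int m" using cm by linarith
  have key: "int k * int c \<ge> int n - int m - int k + 2 * int c" using kc pm cc by linarith
  have n2: "n \<ge> 2" using k n by simp
  have K2: "int k - 2 \<ge> 0" using k by simp
  from u_cases[OF k n2] show False
  proof
    assume A: "n mod k \<noteq> 1 \<and> u_bound n k = 2 * int ((n - 2) div k) - 1"
    define q where "q = (n - 2) div k"
    define r where "r = (n - 2) mod k"
    have nq: "n - 2 = q * k + r" unfolding q_def r_def by simp
    have mq: "int m \<le> 2 * int q - 1" using A m unfolding q_def by simp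
    have nI: "int n = int q * int k + int r + 2" proof -
      have "n = q * k + r + 2" using nq n2 by linarith
      then show ?thesis by simp
    qed
    have cq: "int c \<le> int q - 1" using cc cmm mq by linarith
    have "(int k - 2) * int c \<le> (int k - 2) * (int q - 1)" using cq K2 by (rule mult_left_mono)
    moreover have "(int k - 2) * int c = int k * int c - 2 * int c" by (simp add: algebra_simps)
    moreover have "(int k - 2) * (int q - 1) = int q * int k - int k - 2 * int q + 2" by (simp add: algebra_simps)
    ultimately show False using key nI mq by linarith
  next
    assume A: "n mod k = 1 \<and> u_bound n k = 2 * int ((n - 1) div k) - 2 \<and> n - 1 = k * ((n - 1) div k)"
    define q where "q = (n - 1) div k"
    have mq: "int m \<le> 2 * int q - 2" using A m unfolding q_def by simp
    have nI: "int n = int q * int k + 1"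
    proof -
      have "n - 1 = k * q" using A unfolding q_def by simp
      then have "n = k * q + 1" using n2 by linarith
      then show ?thesis by (simp add: mult.commute)
    qed
    have cq: "int c \<le> int q - 1" using cc cmm mq by linarith
    have "(int k - 2) * int c \<le> (int k - 2) * (int q - 1)" using cq K2 by (rule mult_left_mono)
    moreover have "(int k - 2) * int c = int k * int c - 2 * int c" by (simp add: algebra_simps)
    moreover have "(int k - 2) * (int q - 1) = int q * int k - int k - 2 * int q + 2" by (simp add: algebra_simps)
    ultimately show False using key nI mq by linarith
  qed
qed

lemma mod_complement:
  fixes c k :: nat
  assumes "k > 0"
  shows "(c + (k - c mod k) mod k) mod k = 0"
proof (cases "c mod k = 0")
  case True
  then show ?thesis by simp
next
  case False
  have lt: "c mod k < k" using assms by simp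
  then have "(k - c mod k) mod k = k - c mod k" using False by simp
  moreover have "(c + (k - c mod k)) mod k = (c mod k + (k - c mod k)) mod k" by (simp add: mod_add_left_eq)
  moreover have "c mod k + (k - c mod k) = k" using lt by simp
  ultimately show ?thesis by simp
qed

lemma exists_fix_residue:
  fixes s c k :: nat
  assumes "k > 0"
  shows "\<exists>r. (r + s) mod k = c mod k"
proof -
  have "(c + (k - s mod k) mod k + s) mod k = (c + ((k - s mod k) mod k + s)) mod k" by (simp add: add.assoc)
  also have "\<dots> = (c mod k + ((k - s mod k) mod k + s) mod k) mod k" by (simp add: mod_add_eq)
  also have "((k - s mod k) mod k + s) mod k = 0" using mod_complement[OF assms, of s] by (simp add: add.commute)
  finally show ?thesis by (intro exI[of _ "c + (k - s mod k) mod k"]) simp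
qed

lemma universality_w0:
  fixes \<rho> :: "'a \<Rightarrow> nat"
  assumes finW: "finite W" and k: "k \<ge> 1" and N: "card W \<ge> 2*k - 1" and w0: "w0 \<in> W"
  shows "\<exists>t. (\<forall>e\<in>complete_edges W. t e \<in> e) \<and>
             (\<forall>w\<in>W - {w0}. card {e\<in>complete_edges W. t e = w} mod k = \<rho> w mod k)"
proof -
  obtain r where r: "(r + sum \<rho> (W - {w0})) mod k = (card W choose 2) mod k"
    using exists_fix_residue[of k "sum \<rho> (W - {w0})" "card W choose 2"] k by auto
  define \<rho>' where "\<rho>' = \<rho>(w0 := r)"
  have "sum \<rho>' W = \<rho>' w0 + sum \<rho>' (W - {w0})" using finW w0 by (simp add: sum.remove)
  also have "sum \<rho>' (W - {w0}) = sum \<rho> (W - {w0})" unfolding \<rho>'_def by (rule sum.cong) auto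
  finally have "sum \<rho>' W mod k = (card W choose 2) mod k" using r unfolding \<rho>'_def by simp
  from universality[OF finW k N this] obtain t where
    t: "\<forall>e\<in>complete_edges W. t e \<in> e" "\<forall>w\<in>W. card {e\<in>complete_edges W. t e = w} mod k = \<rho>' w mod k"
    by blast
  then show ?thesis unfolding \<rho>'_def by (intro exI[of _ t]) auto
qed

lemma part1:
  fixes V :: "'a set" and A :: "'a set set set" and k n :: nat
  assumes k: "k \<ge> 2" and adm: "k_admissible k n" and n: "n \<ge> 2*k" and finV: "finite V"
    and cV: "card V = n" and A: "partial_kstar_design k V A" and mu: "int (card A) \<le> u_bound n k"
  shows "has_completion k V A"
proof -
  have k1: "k \<ge> 1" and kp: "k > 0" using k by auto
  have Astar: "\<forall>S\<in>A. is_kstar k V S" and Adisj: "\<forall>S\<in>A. \<forall>S'\<in>A. S \<noteq> S' \<longrightarrow> S \<inter> S' = {}"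
    using A unfolding partial_kstar_design_def by auto
  define cen where "cen = (\<lambda>S. SOME c. \<exists>L. c \<in> V \<and> L \<subseteq> V \<and> c \<notin> L \<and> finite L \<and> card L = k \<and> S = (\<lambda>l. {c, l}) ` L)"
  define lv where "lv = (\<lambda>S. SOME L. cen S \<in> V \<and> L \<subseteq> V \<and> cen S \<notin> L \<and> finite L \<and> card L = k \<and> S = (\<lambda>l. {cen S, l}) ` L)"
  have cl: "cen S \<in> V \<and> lv S \<subseteq> V \<and> cen S \<notin> lv S \<and> finite (lv S) \<and> card (lv S) = k \<and> S = (\<lambda>l. {cen S, l}) ` lv S"
    if "S \<in> A" for S
  proof -
    have "\<exists>c L. c \<in> V \<and> L \<subseteq> V \<and> c \<notin> L \<and> finite L \<and> card L = k \<and> S = (\<lambda>l. {c, l}) ` L"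
      using Astar that unfolding is_kstar_def by blast
    then have "\<exists>L. cen S \<in> V \<and> L \<subseteq> V \<and> cen S \<notin> L \<and> finite L \<and> card L = k \<and> S = (\<lambda>l. {cen S, l}) ` L"
      unfolding cen_def by (rule someI_ex)
    then show ?thesis unfolding lv_def by (rule someI_ex)
  qed
  have cardS: "card S = k" if "S \<in> A" for S
  proof -
    have "inj_on (\<lambda>l. {cen S, l}) (lv S)" using cl[OF that] by (auto simp: inj_on_def doubleton_eq_iff)
    then show ?thesis using cl[OF that] card_image by metis
  qed
  have AV: "\<forall>S\<in>A. S \<subseteq> complete_edges V" using Astar kstar_edges by blast
  have finA: "finite A"
  proof -
    have "A \<subseteq> Pow (complete_edges V)" using AV by auto
    then show ?thesis using finite_complete_edges[OF finV] finite_subset by blast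
  qed
  define X where "X = cen ` A"
  define R where "R = V - X"
  define p where "p = card X"
  define N where "N = card R"
  define m where "m = card A"
  have XV: "X \<subseteq> V" unfolding X_def using cl by auto
  have finX: "finite X" unfolding X_def using finA by simp
  have finR: "finite R" unfolding R_def using finV by simp
  have pm: "p \<le> m" unfolding p_def m_def X_def using finA card_image_le by blast
  have Np: "N = n - p" unfolding N_def R_def p_def using card_Diff_subset[OF finX XV] cV by simp
  have pn: "p \<le> n" unfolding p_def using card_mono[OF finV XV] cV by simp
  have mN: "m + 2 * k - 1 \<le> n" using arith_N[OF k n] mu unfolding m_def by simp
  have N2k: "N \<ge> 2 * k - 1" using mN pm Np by simp
  have Aedge: "\<exists>S\<in>A. \<exists>l\<in>lv S. e = {cen S, l}" if eA: "e \<in> \<Union>A" for e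
  proof -
    obtain S where S: "S \<in> A" "e \<in> S" using eA by auto
    have eq: "S = (\<lambda>l. {cen S, l}) ` lv S" using cl[OF S(1)] by blast
    have "e \<in> (\<lambda>l. {cen S, l}) ` lv S" by (rule subst[OF eq, where P = "\<lambda>Z. e \<in> Z"]) (rule S(2))
    then show ?thesis using S(1) by blast
  qed
  have RR: "{a, b} \<notin> \<Union>A" if ab: "a \<in> R" "b \<in> R" for a b
  proof
    assume "{a, b} \<in> \<Union>A"
    then obtain S l where "S \<in> A" "l \<in> lv S" "{a, b} = {cen S, l}" using Aedge by blast
    then have "cen S \<in> X" "cen S \<in> {a, b}" unfolding X_def by auto
    then show False using ab unfolding R_def by auto
  qed
  have XR: "\<exists>S\<in>A. cen S = x \<and> w \<in> lv S" if xw: "x \<in> X" "w \<in> R" "{x, w} \<in> \<Union>A" for x w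
  proof -
    obtain S l where S: "S \<in> A" "l \<in> lv S" "{x, w} = {cen S, l}" using Aedge xw(3) by blast
    have "cen S \<noteq> w" using S(1) xw(2) unfolding R_def X_def by auto
    then have "cen S = x" "l = w" using S(3) by (auto simp: doubleton_eq_iff)
    then show ?thesis using S by blast
  qed
  define c where "c = (\<lambda>x. card {S\<in>A. cen S = x})"
  define f where "f = (\<lambda>x. card {w\<in>R. {x, w} \<notin> \<Union>A})"
  have finRf: "finite {w\<in>R. P w}" for P using finR by simp
  have fbound: "f x + k * c x \<ge> N" if xX: "x \<in> X" for x
  proof -
    have sub: "{w\<in>R. {x, w} \<in> \<Union>A} \<subseteq> (\<Union>S\<in>{S\<in>A. cen S = x}. lv S)"
      using XR[OF xX] by blast
    have finAx: "finite {S\<in>A. cen S = x}" using finA by simp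
    have "card {w\<in>R. {x, w} \<in> \<Union>A} \<le> card (\<Union>S\<in>{S\<in>A. cen S = x}. lv S)"
      by (rule card_mono) (use sub finAx cl in auto)
    also have "\<dots> \<le> (\<Sum>S\<in>{S\<in>A. cen S = x}. card (lv S))" by (rule card_UN_le[OF finAx])
    also have "\<dots> = (\<Sum>S\<in>{S\<in>A. cen S = x}. k)" using cl by (intro sum.cong) auto
    also have "\<dots> = k * c x" unfolding c_def by simp
    finally have le: "card {w\<in>R. {x, w} \<in> \<Union>A} \<le> k * c x" .
    have Req: "R = {w\<in>R. {x, w} \<notin> \<Union>A} \<union> {w\<in>R. {x, w} \<in> \<Union>A}" by auto
    have "card ({w\<in>R. {x, w} \<notin> \<Union>A} \<union> {w\<in>R. {x, w} \<in> \<Union>A}) = f x + card {w\<in>R. {x, w} \<in> \<Union>A}"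
      unfolding f_def by (rule card_Un_disjoint) (auto simp: finRf)
    then have "N = f x + card {w\<in>R. {x, w} \<in> \<Union>A}" unfolding N_def using arg_cong[OF Req, of card] by simp
    then show ?thesis using le by simp
  qed
  have msum: "m = (\<Sum>x\<in>X. c x)"
  proof -
    have "A = (\<Union>x\<in>X. {S\<in>A. cen S = x})" unfolding X_def by auto
    then have "card A = card (\<Union>x\<in>X. {S\<in>A. cen S = x})" by simp
    also have "\<dots> = (\<Sum>x\<in>X. card {S\<in>A. cen S = x})"
      by (rule card_UN_disjoint[OF finX]) (use finA in auto)
    finally show ?thesis unfolding m_def c_def .
  qed
  have cpos: "c x \<ge> 1" if xX: "x \<in> X" for x
  proof -
    obtain S where "S \<in> A" "cen S = x" using xX unfolding X_def by auto
    then have "{S\<in>A. cen S = x} \<noteq> {}" by auto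
    then show ?thesis unfolding c_def using finA by (simp add: Suc_le_eq card_gt_0_iff)
  qed
  have cm2: "c x + c y + (p - 2) \<le> m" if xy: "x \<in> X" "y \<in> X" "x \<noteq> y" for x y
  proof -
    have "m = c x + c y + (\<Sum>z\<in>X - {x, y}. c z)" using msum sum_two[OF finX xy] by simp
    moreover have "(\<Sum>z\<in>X - {x, y}. c z) \<ge> (\<Sum>z\<in>X - {x, y}. 1)" by (rule sum_mono) (use cpos in auto)
    moreover have "(\<Sum>z\<in>X - {x, y}. (1::nat)) = p - 2" unfolding p_def using xy finX by simp
    ultimately show ?thesis by simp
  qed
  have claim: "f x + 1 \<ge> k \<or> f y + 1 \<ge> k" if xy: "x \<in> X" "y \<in> X" "x \<noteq> y" for x y
  proof (rule ccontr)
    assume "\<not> ?thesis"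
    then have fx: "f x + 2 \<le> k" and fy: "f y + 2 \<le> k" by auto
    have p2: "p \<ge> 2"
    proof -
      have "{x, y} \<subseteq> X" using xy by auto
      then have "card {x, y} \<le> p" unfolding p_def using finX card_mono by blast
      then show ?thesis using xy by simp
    qed
    show False
      using arith_claim[OF k n _ cpos[OF xy(1)] cpos[OF xy(2)] cm2[OF xy] p2 pn _ _ fx fy] mu fbound[OF xy(1)] fbound[OF xy(2)] Np
      unfolding m_def by simp
  qed
  define P where "P = {x\<in>X. f x + 1 < k}"
  define TX where "TX = (\<lambda>a b. a \<in> X \<and> b \<in> X \<and> a \<noteq> b \<and> {a, b} \<notin> \<Union>A \<and>
                         (b \<in> P \<or> (a \<notin> P \<and> b \<notin> P \<and> (SOME z. z \<in> {a, b}) = a)))"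
  have PP: "False" if "a \<in> P" "b \<in> P" "a \<noteq> b" "{a, b} \<notin> \<Union>A" for a b
    using claim[of a b] that unfolding P_def by auto
  have OXP: "{b. TX a b} = {}" if aP: "a \<in> P" for a
    using PP[OF aP] aP unfolding TX_def by auto
  have finOX: "finite {b. TX a b}" for a using finX unfolding TX_def by (auto intro: finite_subset[of _ X])
  define need where "need = (\<lambda>a. (k - card {b. TX a b} mod k) mod k)"
  have need_le: "need a \<le> f a" if aX: "a \<in> X" for a
  proof (cases "a \<in> P")
    case True
    have "card {b. TX a b} = 0" using OXP[OF True] by (simp only: card.empty)
    then show ?thesis unfolding need_def by simp
  next
    case False
    then have "f a + 1 \<ge> k" using aX unfolding P_def by auto
    moreover have "need a < k" unfolding need_def using kp by simp
    ultimately show ?thesis by simp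
  qed
  define Fs where "Fs = (\<lambda>a. SOME F. F \<subseteq> {w\<in>R. {a, w} \<notin> \<Union>A} \<and> card F = need a)"
  have Fs: "Fs a \<subseteq> {w\<in>R. {a, w} \<notin> \<Union>A} \<and> card (Fs a) = need a" if aX: "a \<in> X" for a
  proof -
    have "\<exists>F. F \<subseteq> {w\<in>R. {a, w} \<notin> \<Union>A} \<and> card F = need a"
      using obtain_subset_with_card_n[of "need a" "{w\<in>R. {a, w} \<notin> \<Union>A}"] need_le[OF aX]
      unfolding f_def by metis
    then show ?thesis unfolding Fs_def by (rule someI_ex)
  qed
  define g where "g = (\<lambda>w. card {b\<in>X. {w, b} \<notin> \<Union>A \<and> w \<notin> Fs b})"
  define \<rho> where "\<rho> = (\<lambda>w. (k - g w mod k) mod k)"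
  have "R \<noteq> {}" using N2k k unfolding N_def by auto
  then obtain w0 where w0: "w0 \<in> R" by auto
  obtain t where t: "\<forall>e\<in>complete_edges R. t e \<in> e"
    "\<forall>w\<in>R - {w0}. card {e\<in>complete_edges R. t e = w} mod k = \<rho> w mod k"
    using universality_w0[OF finR k1 _ w0, of \<rho>] N2k unfolding N_def by blast
  define TR where "TR = (\<lambda>a b. a \<in> R \<and> b \<in> R \<and> a \<noteq> b \<and> t {a, b} = a)"
  define T where "T = (\<lambda>a b. TX a b \<or> TR a b \<or> (a \<in> X \<and> b \<in> Fs a) \<or>
                          (a \<in> R \<and> b \<in> X \<and> {a, b} \<notin> \<Union>A \<and> a \<notin> Fs b))"
  have XRd: "X \<inter> R = {}" and VXR: "V = X \<union> R" unfolding R_def using XV by auto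
  have FsR: "b \<in> R" "{a, b} \<notin> \<Union>A" if "a \<in> X" "b \<in> Fs a" for a b using Fs[OF that(1)] that(2) by auto
  have T1: "a \<in> V \<and> b \<in> V \<and> a \<noteq> b \<and> {a, b} \<notin> \<Union>A" if Tab: "T a b" for a b
  proof -
    consider "TX a b" | "TR a b" | "a \<in> X \<and> b \<in> Fs a" | "a \<in> R \<and> b \<in> X \<and> {a, b} \<notin> \<Union>A \<and> a \<notin> Fs b"
      using Tab unfolding T_def by blast
    then show ?thesis
    proof cases
      case 1 then show ?thesis unfolding TX_def using XV by auto
    next
      case 2 then show ?thesis unfolding TR_def using RR unfolding R_def by auto
    next
      case 3 then show ?thesis using FsR[of a b] XV XRd unfolding R_def by auto
    next
      case 4 then show ?thesis using XV XRd unfolding R_def by auto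
    qed
  qed
  have T2: "T a b \<or> T b a" if ab: "a \<in> V" "b \<in> V" "a \<noteq> b" "{a, b} \<notin> \<Union>A" for a b
  proof -
    have sym: "{b, a} = {a, b}" by (rule insert_commute)
    consider "a \<in> X" "b \<in> X" | "a \<in> R" "b \<in> R" | "a \<in> X" "b \<in> R" | "a \<in> R" "b \<in> X"
      using ab VXR by blast
    then show ?thesis
    proof cases
      case 1
      have "(SOME z. z \<in> {a, b}) \<in> {a, b}" by (rule someI[of _ a]) simp
      then have "(SOME z. z \<in> {a, b}) = a \<or> (SOME z. z \<in> {b, a}) = b" using sym by auto
      then have "TX a b \<or> TX b a" unfolding TX_def using 1 ab sym by auto
      then show ?thesis unfolding T_def by blast
    next
      case 2
      have "{a, b} \<in> complete_edges R" unfolding complete_edges_def using 2 ab by auto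
      then have "t {a, b} \<in> {a, b}" using t(1) by blast
      then have "TR a b \<or> TR b a" unfolding TR_def using 2 ab sym by auto
      then show ?thesis unfolding T_def by blast
    next
      case 3
      then show ?thesis unfolding T_def using ab sym by auto
    next
      case 4
      then show ?thesis unfolding T_def using ab sym by auto
    qed
  qed
  have T3: "\<not> T b a" if Tab: "T a b" for a b
  proof
    assume Tba: "T b a"
    have sym: "{b, a} = {a, b}" by (rule insert_commute)
    have ab: "a \<in> V" "b \<in> V" "a \<noteq> b" "{a, b} \<notin> \<Union>A" using T1[OF Tab] by auto
    consider "a \<in> X" "b \<in> X" | "a \<in> R" "b \<in> R" | "a \<in> X" "b \<in> R" | "a \<in> R" "b \<in> X"
      using ab VXR by blast
    then show False
    proof cases
      case 1
      then have "TX a b" "TX b a" using Tab Tba XRd FsR unfolding T_def TR_def by blast+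
      then show False unfolding TX_def using PP[of a b] ab sym by auto
    next
      case 2
      then have "TR a b" "TR b a" using Tab Tba XRd FsR unfolding T_def TX_def by blast+
      then show False unfolding TR_def using sym by auto
    next
      case 3
      then have "b \<in> Fs a" using Tab XRd unfolding T_def TX_def TR_def by blast
      moreover have "b \<notin> Fs a" using Tba 3 XRd FsR unfolding T_def TX_def TR_def by blast
      ultimately show False by simp
    next
      case 4
      then have "a \<in> Fs b" using Tba XRd unfolding T_def TX_def TR_def by blast
      moreover have "a \<notin> Fs b" using Tab 4 XRd FsR unfolding T_def TX_def TR_def by blast
      ultimately show False by simp
    qed
  qed
  have degX: "k dvd card {b. T a b}" if aX: "a \<in> X" for a
  proof -
    have aR: "a \<notin> R" using aX XRd by auto
    have eq: "{b. T a b} = {b. TX a b} \<union> Fs a" unfolding T_def using aR aX unfolding TR_def by auto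
    have finFs: "finite (Fs a)" using Fs[OF aX] finR by (auto intro: finite_subset[of _ R])
    have dj: "{b. TX a b} \<inter> Fs a = {}" using Fs[OF aX] XRd unfolding TX_def by auto
    have "card {b. TX a b} + card (Fs a) = card ({b. TX a b} \<union> Fs a)"
      by (rule card_Un_disjoint[symmetric]) (use finOX finFs dj in auto)
    then have "card {b. T a b} = card {b. TX a b} + need a" using eq Fs[OF aX] by simp
    then show ?thesis unfolding need_def using mod_complement[OF kp, of "card {b. TX a b}"] by auto
  qed
  have outR: "card {b. TR a b} = card {e\<in>complete_edges R. t e = a}" if aR: "a \<in> R" for a
  proof -
    have "{e\<in>complete_edges R. t e = a} = (\<lambda>b. {a, b}) ` {b. TR a b}"
    proof
      show "(\<lambda>b. {a, b}) ` {b. TR a b} \<subseteq> {e\<in>complete_edges R. t e = a}"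
        unfolding TR_def complete_edges_def by auto
    next
      show "{e\<in>complete_edges R. t e = a} \<subseteq> (\<lambda>b. {a, b}) ` {b. TR a b}"
      proof
        fix e assume e: "e \<in> {e\<in>complete_edges R. t e = a}"
        then obtain x y where xy: "e = {x, y}" "x \<in> R" "y \<in> R" "x \<noteq> y" unfolding complete_edges_def by auto
        have "t e \<in> e" using e t(1) by blast
        then have "a = x \<or> a = y" using e xy by auto
        then show "e \<in> (\<lambda>b. {a, b}) ` {b. TR a b}"
        proof
          assume "a = x" then show ?thesis using e xy unfolding TR_def by auto
        next
          assume "a = y" then show ?thesis using e xy unfolding TR_def by (auto simp: insert_commute)
        qed
      qed
    qed
    moreover have "inj_on (\<lambda>b. {a, b}) {b. TR a b}" by (auto simp: inj_on_def doubleton_eq_iff)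
    ultimately show ?thesis by (simp add: card_image)
  qed
  have degR: "k dvd card {b. T a b}" if aR: "a \<in> R" "a \<noteq> w0" for a
  proof -
    have aX: "a \<notin> X" using aR XRd by auto
    let ?G = "{b\<in>X. {a, b} \<notin> \<Union>A \<and> a \<notin> Fs b}"
    have eq: "{b. T a b} = {b. TR a b} \<union> ?G" unfolding T_def TX_def using aX aR by auto
    have finTR: "finite {b. TR a b}" using finR unfolding TR_def by (auto intro: finite_subset[of _ R])
    have dj: "{b. TR a b} \<inter> ?G = {}" using XRd unfolding TR_def by auto
    have cT: "card {b. T a b} = card {b. TR a b} + g a" unfolding eq g_def
      by (rule card_Un_disjoint) (use finTR finX dj in auto)
    have cTRm: "card {b. TR a b} mod k = \<rho> a mod k" using outR[OF aR(1)] t(2) aR by auto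
    have "card {b. T a b} mod k = (card {b. TR a b} + g a) mod k" using cT by simp
    also have "\<dots> = (card {b. TR a b} mod k + g a) mod k" by (rule mod_add_left_eq[symmetric])
    also have "\<dots> = (\<rho> a mod k + g a) mod k" using cTRm by simp
    also have "\<dots> = (\<rho> a + g a) mod k" by (rule mod_add_left_eq)
    also have "\<dots> = 0" unfolding \<rho>_def using mod_complement[OF kp, of "g a"] by (simp add: add.commute)
    finally show ?thesis by auto
  qed
  have finOut: "finite {b. T a b}" for a using T1 finV by (auto intro: finite_subset[of _ V])
  have sumO: "(\<Sum>a\<in>V. card {b. T a b}) = card {{a, b} | a b. T a b}"
    by (rule sum_out[OF finV]) (use T1 T3 in auto)
  have Leq: "{{a, b} | a b. T a b} = complete_edges V - \<Union>A"
  proof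
    show "{{a, b} |a b. T a b} \<subseteq> complete_edges V - \<Union>A" using T1 unfolding complete_edges_def by blast
  next
    show "complete_edges V - \<Union>A \<subseteq> {{a, b} |a b. T a b}"
    proof
      fix e assume e: "e \<in> complete_edges V - \<Union>A"
      then obtain a b where ab: "e = {a, b}" "a \<in> V" "b \<in> V" "a \<noteq> b" unfolding complete_edges_def by auto
      then have "T a b \<or> T b a" using T2 e by auto
      then show "e \<in> {{a, b} |a b. T a b}" using ab by (auto simp: insert_commute)
    qed
  qed
  have cU: "card (\<Union>A) = k * m"
  proof -
    have finS: "finite S" if "S \<in> A" for S
      using AV that finite_complete_edges[OF finV] finite_subset by blast
    have pw: "pairwise disjnt A" using Adisj by (auto simp: pairwise_def disjnt_def)
    have "card (\<Union>A) = sum card A" by (rule card_Union_disjoint[OF pw finS])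
    also have "\<dots> = sum (\<lambda>_. k) A" using cardS by (rule sum.cong[OF refl])
    finally show ?thesis unfolding m_def by simp
  qed
  have "card (complete_edges V - \<Union>A) = (n choose 2) - k * m"
  proof -
    have "\<Union>A \<subseteq> complete_edges V" using AV by auto
    then have "card (complete_edges V - \<Union>A) = card (complete_edges V) - card (\<Union>A)"
      using finite_complete_edges[OF finV] by (meson card_Diff_subset finite_subset)
    then show ?thesis using cU card_complete_edges[OF finV] cV by simp
  qed
  moreover have "k dvd (n choose 2)" using adm unfolding k_admissible_def by auto
  ultimately have dvL: "k dvd (\<Sum>a\<in>V. card {b. T a b})" using sumO Leq by (simp add: dvd_diff_nat)
  have w0V: "w0 \<in> V" using w0 unfolding R_def by auto
  have "(\<Sum>a\<in>V. card {b. T a b}) = card {b. T w0 b} + (\<Sum>a\<in>V - {w0}. card {b. T a b})"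
    using finV w0V by (simp add: sum.remove)
  moreover have "k dvd (\<Sum>a\<in>V - {w0}. card {b. T a b})"
  proof (rule dvd_sum)
    fix a assume "a \<in> V - {w0}"
    then show "k dvd card {b. T a b}" using degX degR VXR by auto
  qed
  ultimately have "k dvd card {b. T w0 b}" using dvL by (simp add: dvd_add_left_iff)
  then have dv: "\<forall>a\<in>V. k dvd card {b. T a b}" using degX degR VXR by auto
  show ?thesis
    by (rule completion_from_orient[OF k1 finV A, of T]) (use T1 T2 T3 dv in auto)
qed

lemma noncompl:
  fixes V :: "'a set"
  assumes finV: "finite V" and A: "partial_kstar_design k V A"
    and ab: "a \<in> V" "b \<in> V" "a \<noteq> b" "{a, b} \<notin> \<Union>A"
    and few: "\<And>c. c \<in> {a, b} \<Longrightarrow> card {l\<in>V. l \<noteq> c \<and> {c, l} \<notin> \<Union>A} < k"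
  shows "\<not> has_completion k V A"
proof
  assume "has_completion k V A"
  then obtain B where B: "kstar_design k V B" "A \<subseteq> B" unfolding has_completion_def by blast
  have "{a, b} \<in> complete_edges V" unfolding complete_edges_def using ab by auto
  then have "{a, b} \<in> \<Union>B" using B(1) unfolding kstar_design_def by simp
  then obtain T where T: "T \<in> B" "{a, b} \<in> T" by auto
  have Bp: "\<forall>S\<in>B. is_kstar k V S" "\<forall>S\<in>B. \<forall>S'\<in>B. S \<noteq> S' \<longrightarrow> S \<inter> S' = {}"
    using B(1) unfolding kstar_design_def partial_kstar_design_def by auto
  obtain c L where cL: "c \<in> V" "L \<subseteq> V" "c \<notin> L" "finite L" "card L = k" "T = (\<lambda>l. {c, l}) ` L"
    using Bp(1) T(1) unfolding is_kstar_def by blast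
  have "{a, b} \<in> (\<lambda>l. {c, l}) ` L" using T(2) cL(6) by simp
  then obtain l0 where "l0 \<in> L" "{a, b} = {c, l0}" by auto
  then have cab: "c \<in> {a, b}" by auto
  have TA: "T \<notin> A" using T(2) ab(4) by auto
  have "\<forall>e\<in>T. e \<notin> \<Union>A"
  proof
    fix e assume eT: "e \<in> T"
    show "e \<notin> \<Union>A"
    proof
      assume "e \<in> \<Union>A"
      then obtain S where "S \<in> A" "e \<in> S" by auto
      then have "S \<noteq> T" "S \<in> B" using TA B(2) by auto
      then have "S \<inter> T = {}" using Bp(2) T(1) by blast
      then show False using \<open>e \<in> S\<close> eT by auto
    qed
  qed
  then have "L \<subseteq> {l\<in>V. l \<noteq> c \<and> {c, l} \<notin> \<Union>A}" using cL by auto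
  then have "card L \<le> card {l\<in>V. l \<noteq> c \<and> {c, l} \<notin> \<Union>A}" using finV by (intro card_mono) auto
  then show False using few[OF cab] cL(5) by simp
qed

definition istar :: "nat \<Rightarrow> nat \<Rightarrow> nat \<Rightarrow> nat \<Rightarrow> nat set set" where
  "istar k c s j = (\<lambda>l. {c, l}) ` {s + j * k ..< s + j * k + k}"

lemma istar_kstar:
  assumes "c < n" "c < s" "s + j * k + k \<le> n"
  shows "is_kstar k {..<n} (istar k c s j)"
  unfolding is_kstar_def istar_def using assms
  by (intro exI[of _ c] exI[of _ "{s + j * k ..< s + j * k + k}"]) auto

lemma istar_edge: "e \<in> istar k c s j \<Longrightarrow> \<exists>l. e = {c, l} \<and> s + j * k \<le> l \<and> l < s + j * k + k"
  unfolding istar_def by auto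

lemma istar_disj:
  assumes "c < s" "c' < s" "(c, j) \<noteq> (c', j')"
  shows "istar k c s j \<inter> istar k c' s j' = {}"
proof (rule ccontr)
  assume "istar k c s j \<inter> istar k c' s j' \<noteq> {}"
  then obtain e where e: "e \<in> istar k c s j" "e \<in> istar k c' s j'" by auto
  obtain l where l: "e = {c, l}" "s + j * k \<le> l" "l < s + j * k + k" using istar_edge[OF e(1)] by blast
  obtain l' where l': "e = {c', l'}" "s + j' * k \<le> l'" "l' < s + j' * k + k" using istar_edge[OF e(2)] by blast
  have "c = c' \<and> l = l'" using l l' assms(1,2) by (auto simp: doubleton_eq_iff)
  then have jj: "j \<noteq> j'" and ll: "l = l'" and cc: "c = c'" using assms(3) by auto
  show False
  proof (cases "j < j'")
    case True
    then have "(j + 1) * k \<le> j' * k" by (intro mult_le_mono1) simp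
    then show False using l l' ll by simp
  next
    case False
    then have "j' < j" using jj by simp
    then have "(j' + 1) * k \<le> j * k" by (intro mult_le_mono1) simp
    then show False using l l' ll by simp
  qed
qed

lemma istar_ne: "k \<ge> 1 \<Longrightarrow> istar k c s j \<noteq> {}"
  unfolding istar_def by auto

lemma istar_cover:
  assumes k: "k \<ge> 1" and l: "s \<le> l" "l < s + Q * k"
  shows "\<exists>j<Q. {c, l} \<in> istar k c s j"
proof -
  define j where "j = (l - s) div k"
  have "j * k + (l - s) mod k = l - s" unfolding j_def by simp
  moreover have "(l - s) mod k < k" using k by simp
  ultimately have "s + j * k \<le> l" "l < s + j * k + k" using l by linarith+
  moreover have "j < Q" unfolding j_def using l k by (simp add: less_mult_imp_div_less)
  ultimately show ?thesis unfolding istar_def by auto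
qed

lemma card_le_few:
  fixes c a s n :: nat
  assumes "{l\<in>{..<n}. l \<noteq> c \<and> P l} \<subseteq> {a} \<union> {s..<n}"
  shows "card {l\<in>{..<n}. l \<noteq> c \<and> P l} \<le> 1 + (n - s)"
proof -
  have "card {l\<in>{..<n}. l \<noteq> c \<and> P l} \<le> card ({a} \<union> {s..<n})" using assms by (intro card_mono) auto
  also have "\<dots> \<le> card {a} + card {s..<n}" by (rule card_Un_le)
  finally show ?thesis by simp
qed

lemma constr_non1:
  fixes k n :: nat
  assumes k: "k \<ge> 2" and n: "n \<ge> 2" and nm: "n mod k \<noteq> 1"
  shows "\<exists>(V :: nat set) A. finite V \<and> card V = n \<and> partial_kstar_design k V A
               \<and> finite A \<and> int (card A) = u_bound n k + 1 \<and> \<not> has_completion k V A"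
proof -
  define q where "q = (n - 2) div k"
  define r where "r = (n - 2) mod k"
  have nq: "n - 2 = q * k + r" unfolding q_def r_def by simp
  have rk: "r < k" unfolding r_def using k by simp
  have rk1: "r \<noteq> k - 1"
  proof
    assume "r = k - 1"
    then have "n = 1 + (q + 1) * k" using nq n k by (simp add: algebra_simps)
    then have "n mod k = (1 + (q + 1) * k) mod k" by simp
    also have "\<dots> = 1 mod k" by (rule mod_mult_self1)
    finally show False using nm k by simp
  qed
  define V where "V = {..<n}"
  define I where "I = {0, 1::nat} \<times> {..<q}"
  define st where "st = (\<lambda>(c, j). istar k c 2 j)"
  define A where "A = st ` I"
  have finI: "finite I" unfolding I_def by simp
  have stI: "st x \<inter> st y = {}" if "x \<in> I" "y \<in> I" "x \<noteq> y" for x y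
    using that istar_disj[of "fst x" 2 "fst y" "snd x" "snd y" k] unfolding I_def st_def
    by (auto simp: case_prod_beta)
  have stne: "st x \<noteq> {}" for x unfolding st_def using istar_ne k by (auto simp: case_prod_beta)
  have inj: "inj_on st I"
  proof (rule inj_onI)
    fix x y assume "x \<in> I" "y \<in> I" "st x = st y"
    then show "x = y" using stI stne by fastforce
  qed
  have cA: "card A = 2 * q" unfolding A_def using card_image[OF inj] unfolding I_def by simp
  have u: "u_bound n k = 2 * int q - 1" using u_cases[OF k n] nm unfolding q_def by auto
  have part: "partial_kstar_design k V A"
    unfolding partial_kstar_design_def
  proof (intro conjI ballI impI)
    fix S assume "S \<in> A"
    then obtain c j where cj: "c \<in> {0, 1}" "j < q" "S = istar k c 2 j" unfolding A_def I_def st_def by auto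
    have "(j + 1) * k \<le> q * k" using cj(2) by (intro mult_le_mono1) simp
    then have "2 + j * k + k \<le> n" using nq n by simp
    then show "is_kstar k V S" unfolding V_def cj(3) using cj(1) n by (intro istar_kstar) auto
  next
    fix S S' assume "S \<in> A" "S' \<in> A" "S \<noteq> S'"
    then show "S \<inter> S' = {}" unfolding A_def using stI by blast
  qed
  have e01: "{0, 1} \<notin> \<Union>A"
  proof
    assume "{0, 1} \<in> \<Union>A"
    then obtain c j where "{0, 1} \<in> istar k c 2 j" unfolding A_def I_def st_def by auto
    then obtain l where "{0::nat, 1} = {c, l}" "2 + j * k \<le> l" using istar_edge by blast
    then show False by (auto simp: doubleton_eq_iff)
  qed
  have few: "card {l\<in>V. l \<noteq> c \<and> {c, l} \<notin> \<Union>A} < k" if c: "c \<in> {0, 1}" for c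
  proof -
    have "{l\<in>{..<n}. l \<noteq> c \<and> {c, l} \<notin> \<Union>A} \<subseteq> {1 - c} \<union> {2 + q * k..<n}"
    proof
      fix l assume l: "l \<in> {l\<in>{..<n}. l \<noteq> c \<and> {c, l} \<notin> \<Union>A}"
      show "l \<in> {1 - c} \<union> {2 + q * k..<n}"
      proof (cases "l < 2")
        case True
        then show ?thesis using l c by auto
      next
        case False
        show ?thesis
        proof (rule ccontr)
          assume "\<not> ?thesis"
          then have "l < 2 + q * k" using l by auto
          then obtain j where "j < q" "{c, l} \<in> istar k c 2 j" using istar_cover[of k 2 l q c] k False by auto
          moreover have "istar k c 2 j \<in> A" unfolding A_def I_def st_def using c \<open>j < q\<close> by auto
          ultimately show False using l by auto
        qed
      qed
    qed
    then have "card {l\<in>{..<n}. l \<noteq> c \<and> {c, l} \<notin> \<Union>A} \<le> 1 + (n - (2 + q * k))" by (rule card_le_few)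
    moreover have "n - (2 + q * k) = r" using nq by simp
    ultimately show ?thesis unfolding V_def using rk rk1 by linarith
  qed
  have "\<not> has_completion k V A"
    by (rule noncompl[of V k A 0 1]) (use part e01 few n in \<open>auto simp: V_def\<close>)
  moreover have "finite A" unfolding A_def using finI by simp
  ultimately show ?thesis using part cA u unfolding V_def by (intro exI[of _ "{..<n}"] exI[of _ A]) auto
qed

lemma constr_1:
  fixes k n :: nat
  assumes k: "k \<ge> 2" and n: "n \<ge> 2" and nm: "n mod k = 1"
  shows "\<exists>(V :: nat set) A. finite V \<and> card V = n \<and> partial_kstar_design k V A
               \<and> finite A \<and> int (card A) = u_bound n k + 1 \<and> \<not> has_completion k V A"
proof -
  define q where "q = (n - 1) div k"
  have u0: "u_bound n k = 2 * int q - 2 \<and> n - 1 = k * q" using u_cases[OF k n] nm unfolding q_def by auto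
  then have u: "u_bound n k = 2 * int q - 2" and nq: "n - 1 = k * q" by auto
  have q1: "q \<ge> 1" using nq n by (cases q) auto
  have nk: "n \<ge> k + 1"
  proof -
    have "k \<le> k * q" by (metis mult.right_neutral mult_le_mono2 q1)
    then show ?thesis using nq n by linarith
  qed
  have qk: "(q - 1) * k + k = q * k" using q1 by (cases q) auto
  define V where "V = {..<n}"
  define I where "I = {0, 1::nat} \<times> {..<q - 1}"
  define st where "st = (\<lambda>(c, j). istar k c 3 j)"
  define L2 where "L2 = {0, 1::nat} \<union> {3..<k + 1}"
  define s2 where "s2 = (\<lambda>l. {2::nat, l}) ` L2"
  define A where "A = insert s2 (st ` I)"
  have finI: "finite I" unfolding I_def by simp
  have stI: "st x \<inter> st y = {}" if "x \<in> I" "y \<in> I" "x \<noteq> y" for x y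
    using that istar_disj[of "fst x" 3 "fst y" "snd x" "snd y" k] unfolding I_def st_def
    by (auto simp: case_prod_beta)
  have stne: "st x \<noteq> {}" for x unfolding st_def using istar_ne k by (auto simp: case_prod_beta)
  have inj: "inj_on st I"
  proof (rule inj_onI)
    fix x y assume "x \<in> I" "y \<in> I" "st x = st y"
    then show "x = y" using stI stne by fastforce
  qed
  have s2st: "s2 \<inter> st x = {}" if xI: "x \<in> I" for x
  proof (rule ccontr)
    assume "s2 \<inter> st x \<noteq> {}"
    then obtain e where e: "e \<in> s2" "e \<in> st x" by auto
    obtain c j where cj: "x = (c, j)" "c \<in> {0, 1}" using xI unfolding I_def by auto
    obtain l where l: "e = {c, l}" "3 + j * k \<le> l" using istar_edge[of e k c 3 j] e(2) cj(1) unfolding st_def by auto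
    obtain l' where "l' \<in> L2" "e = {2, l'}" using e(1) unfolding s2_def by auto
    then show False using l cj(2) by (auto simp: doubleton_eq_iff)
  qed
  have s2ni: "s2 \<notin> st ` I"
  proof
    assume "s2 \<in> st ` I"
    then obtain x where "x \<in> I" "s2 = st x" by auto
    moreover have "s2 \<noteq> {}" unfolding s2_def L2_def by auto
    ultimately show False using s2st[of x] by auto
  qed
  have cA: "card A = 2 * (q - 1) + 1" unfolding A_def using card_image[OF inj] s2ni finI unfolding I_def by simp
  have L2c: "card L2 = k"
  proof -
    have "card L2 = card {0, 1::nat} + card {3..<k + 1}" unfolding L2_def by (rule card_Un_disjoint) auto
    then show ?thesis using k by simp
  qed
  have part: "partial_kstar_design k V A"
    unfolding partial_kstar_design_def
  proof (intro conjI ballI impI)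
    fix S assume "S \<in> A"
    then consider "S = s2" | c j where "c \<in> {0, 1}" "j < q - 1" "S = istar k c 3 j"
      unfolding A_def I_def st_def by auto
    then show "is_kstar k V S"
    proof cases
      case 1
      show ?thesis unfolding is_kstar_def 1 s2_def V_def
        by (intro exI[of _ 2] exI[of _ L2]) (use nk k L2c in \<open>auto simp: L2_def\<close>)
    next
      case (2 c j)
      have "(j + 1) * k \<le> (q - 1) * k" using 2(2) by (intro mult_le_mono1) simp
      then have "3 + j * k + k \<le> n" using nq qk k by (simp add: algebra_simps)
      then show ?thesis unfolding V_def 2(3) using 2(1) nk k by (intro istar_kstar) auto
    qed
  next
    fix S S' assume SA: "S \<in> A" "S' \<in> A" "S \<noteq> S'"
    then show "S \<inter> S' = {}" unfolding A_def using stI s2st by blast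
  qed
  have e01: "{0, 1} \<notin> \<Union>A"
  proof
    assume "{0, 1} \<in> \<Union>A"
    then consider "{0::nat, 1} \<in> s2" | c j where "{0, 1} \<in> istar k c 3 j" unfolding A_def I_def st_def by auto
    then show False
    proof cases
      case 1
      then obtain l where "{0::nat, 1} = {2, l}" unfolding s2_def by blast
      then show False by (simp add: doubleton_eq_iff)
    next
      case (2 c j)
      then obtain l where "{0::nat, 1} = {c, l}" "3 + j * k \<le> l" using istar_edge by blast
      then show False by (auto simp: doubleton_eq_iff)
    qed
  qed
  have few: "card {l\<in>V. l \<noteq> c \<and> {c, l} \<notin> \<Union>A} < k" if c: "c \<in> {0, 1}" for c
  proof -
    have "{l\<in>{..<n}. l \<noteq> c \<and> {c, l} \<notin> \<Union>A} \<subseteq> {1 - c} \<union> {3 + (q - 1) * k..<n}"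
    proof
      fix l assume l: "l \<in> {l\<in>{..<n}. l \<noteq> c \<and> {c, l} \<notin> \<Union>A}"
      show "l \<in> {1 - c} \<union> {3 + (q - 1) * k..<n}"
      proof (cases "l < 2")
        case True
        then show ?thesis using l c by auto
      next
        case False
        show ?thesis
        proof (cases "l = 2")
          case True
          have "{c, l} \<in> s2" unfolding s2_def L2_def using True c by (auto simp: insert_commute)
          then show ?thesis using l unfolding A_def by auto
        next
          case False2: False
          show ?thesis
          proof (rule ccontr)
            assume "\<not> ?thesis"
            then have "l < 3 + (q - 1) * k" using l by auto
            then obtain j where "j < q - 1" "{c, l} \<in> istar k c 3 j"
              using istar_cover[of k 3 l "q - 1" c] k False False2 by auto
            moreover have "istar k c 3 j \<in> A" unfolding A_def I_def st_def using c \<open>j < q - 1\<close> by auto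
            ultimately show False using l by auto
          qed
        qed
      qed
    qed
    then have "card {l\<in>{..<n}. l \<noteq> c \<and> {c, l} \<notin> \<Union>A} \<le> 1 + (n - (3 + (q - 1) * k))" by (rule card_le_few)
    moreover have "n - (3 + (q - 1) * k) = k - 2" using nq qk k n by (simp add: algebra_simps)
    ultimately show ?thesis unfolding V_def using k by linarith
  qed
  have "\<not> has_completion k V A"
    by (rule noncompl[of V k A 0 1]) (use part e01 few n in \<open>auto simp: V_def\<close>)
  moreover have "finite A" unfolding A_def using finI by simp
  moreover have "int (card A) = u_bound n k + 1" using cA u q1 by simp
  ultimately show ?thesis using part unfolding V_def by (intro exI[of _ "{..<n}"] exI[of _ A]) auto
qed

theorem theorem1:
  fixes k :: nat
  assumes "k \<ge> 2"
  shows "(\<forall>n (V :: 'a set) A. k_admissible k n \<and> n \<ge> 2 * k \<and> finite V \<and> card V = n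
            \<and> partial_kstar_design k V A \<and> int (card A) \<le> u_bound n k
            \<longrightarrow> has_completion k V A)
       \<and> (\<forall>n. k_admissible k n \<and> n > 1 \<longrightarrow>
            (\<exists>(V :: nat set) A. finite V \<and> card V = n \<and> partial_kstar_design k V A
               \<and> finite A \<and> int (card A) = u_bound n k + 1 \<and> \<not> has_completion k V A))"
proof (intro conjI allI impI)
  fix n and V :: "'a set" and A
  assume H: "k_admissible k n \<and> n \<ge> 2 * k \<and> finite V \<and> card V = n
            \<and> partial_kstar_design k V A \<and> int (card A) \<le> u_bound n k"
  show "has_completion k V A"
    using part1[OF assms, of n V A] H by blast
next
  fix n :: nat
  assume H: "k_admissible k n \<and> n > 1"
  then have n2: "n \<ge> 2" by simp
  show "\<exists>(V :: nat set) A. finite V \<and> card V = n \<and> partial_kstar_design k V A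
               \<and> finite A \<and> int (card A) = u_bound n k + 1 \<and> \<not> has_completion k V A"
  proof (cases "n mod k = 1")
    case True
    then show ?thesis using constr_1[OF assms n2] by blast
  next
    case False
    then show ?thesis using constr_non1[OF assms n2] by blast
  qed
qed

end
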